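(* Let $G$ be a $k$-tree with at least $k+4$ vertices. Then there do not exist two adjacent vertices $v,w$ of degree exactly $k+1$ such that each of $v$ and $w$ is adjacent to a vertex of degree at most $k$.
   Context: $G$ is a finite simple undirected graph. A $k$-tree is a graph having a vertex ordering $\phi:V\to\{1,\dots,|V|\}$ such that, for every vertex $v$, the set of neighbours of $v$ preceding it in $\phi$ is a clique of size exactly $\min(k,\phi(v)-1)$. *)

theory Defs
  imports Main
begin

definition simple_graph :: "'a set \<Rightarrow> ('a \<Rightarrow> 'a \<Rightarrow> bool) \<Rightarrow> bool" where
  "simple_graph V E \<longleftrightarrow> finite V \<and> (\<forall>u v. E u v \<longrightarrow> u \<in> V \<and> v \<in> V)
     \<and> (\<forall>u v. E u v \<longrightarrow> E v u) \<and> (\<forall>v. \<not> E v v)"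

definition neighbours :: "'a set \<Rightarrow> ('a \<Rightarrow> 'a \<Rightarrow> bool) \<Rightarrow> 'a \<Rightarrow> 'a set" where
  "neighbours V E v = {u \<in> V. E v u}"

definition degree :: "'a set \<Rightarrow> ('a \<Rightarrow> 'a \<Rightarrow> bool) \<Rightarrow> 'a \<Rightarrow> nat" where
  "degree V E v = card (neighbours V E v)"

definition is_clique :: "('a \<Rightarrow> 'a \<Rightarrow> bool) \<Rightarrow> 'a set \<Rightarrow> bool" where
  "is_clique E C \<longleftrightarrow> (\<forall>x\<in>C. \<forall>y\<in>C. x \<noteq> y \<longrightarrow> E x y)"

definition k_tree :: "nat \<Rightarrow> 'a set \<Rightarrow> ('a \<Rightarrow> 'a \<Rightarrow> bool) \<Rightarrow> bool" where
  "k_tree k V E \<longleftrightarrow> simple_graph V E \<and>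
     (\<exists>phi :: 'a \<Rightarrow> nat. bij_betw phi V {1..card V} \<and>
        (\<forall>v\<in>V. let P = {u \<in> neighbours V E v. phi u < phi v} in
            is_clique E P \<and> card P = min k (phi v - 1)))"

end

theory Submission
  imports Defs
begin

locale kt =
  fixes k :: nat and V :: "'a set" and E :: "'a \<Rightarrow> 'a \<Rightarrow> bool" and phi :: "'a \<Rightarrow> nat"
  assumes sg: "simple_graph V E"
    and hbij: "bij_betw phi V {1..card V}"
    and hback: "\<forall>v\<in>V. is_clique E {u \<in> neighbours V E v. phi u < phi v}
                 \<and> card {u \<in> neighbours V E v. phi u < phi v} = min k (phi v - 1)"
begin

definition Bk where "Bk v = {u \<in> neighbours V E v. phi u < phi v}"
definition K0 where "K0 = {u \<in> V. phi u \<le> k + 1}"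
definition ch where "ch a c \<longleftrightarrow> c \<in> V \<and> k + 2 \<le> phi c \<and> E a c \<and> phi a < phi c"

lemma finV: "finite V" using sg by (simp add: simple_graph_def)
lemma Ein: "E u v \<Longrightarrow> u \<in> V \<and> v \<in> V" using sg by (simp add: simple_graph_def)
lemma Esym: "E u v \<Longrightarrow> E v u" using sg by (simp add: simple_graph_def)
lemma Eirr: "\<not> E v v" using sg by (simp add: simple_graph_def)
lemma injphi: "inj_on phi V" using hbij by (simp add: bij_betw_def)
lemma phirange: "u \<in> V \<Longrightarrow> 1 \<le> phi u \<and> phi u \<le> card V"
  using hbij by (auto simp: bij_betw_def)
lemma phiex: "1 \<le> i \<Longrightarrow> i \<le> card V \<Longrightarrow> \<exists>u\<in>V. phi u = i"
  using hbij unfolding bij_betw_def by (metis atLeastAtMost_iff imageE)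
lemma phi_eq: "u \<in> V \<Longrightarrow> w \<in> V \<Longrightarrow> phi u = phi w \<Longrightarrow> u = w"
  using injphi by (meson inj_onD)

lemma Bk_card: "v \<in> V \<Longrightarrow> card (Bk v) = min k (phi v - 1)"
  using hback by (simp add: Bk_def)
lemma Bk_sub: "Bk v \<subseteq> V" by (auto simp: Bk_def neighbours_def)
lemma Bk_fin: "finite (Bk v)" using Bk_sub finV finite_subset by blast
lemma Bk_mem: "u \<in> Bk v \<longleftrightarrow> u \<in> V \<and> E v u \<and> phi u < phi v"
  by (auto simp: Bk_def neighbours_def)

lemma card_before: "u \<in> V \<Longrightarrow> card {z \<in> V. phi z < phi u} = phi u - 1"
proof -
  assume u: "u \<in> V"
  have "bij_betw phi {z \<in> V. phi z < phi u} {1..<phi u}"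
  proof -
    have "phi ` {z \<in> V. phi z < phi u} = {1..<phi u}"
    proof
      show "phi ` {z \<in> V. phi z < phi u} \<subseteq> {1..<phi u}" using phirange by auto
      show "{1..<phi u} \<subseteq> phi ` {z \<in> V. phi z < phi u}"
      proof
        fix i assume "i \<in> {1..<phi u}"
        then obtain z where "z \<in> V" "phi z = i" using phiex[of i] phirange[OF u] by auto
        then show "i \<in> phi ` {z \<in> V. phi z < phi u}" using \<open>i \<in> {1..<phi u}\<close> by force
      qed
    qed
    moreover have "inj_on phi {z \<in> V. phi z < phi u}" using injphi by (auto intro: inj_on_subset)
    ultimately show ?thesis by (simp add: bij_betw_def)
  qed
  then show ?thesis by (simp add: bij_betw_same_card)
qed

lemma K0_card: "k + 1 \<le> card V \<Longrightarrow> card K0 = k + 1"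
proof -
  assume h: "k + 1 \<le> card V"
  have "phi ` K0 = {1..k+1}"
  proof
    show "phi ` K0 \<subseteq> {1..k+1}" using phirange by (auto simp: K0_def)
    show "{1..k+1} \<subseteq> phi ` K0"
    proof
      fix i assume i: "i \<in> {1..k+1}"
      then obtain z where "z \<in> V" "phi z = i" using phiex[of i] h by auto
      then show "i \<in> phi ` K0" using i by (force simp: K0_def)
    qed
  qed
  moreover have "inj_on phi K0" using injphi by (auto simp: K0_def intro: inj_on_subset)
  ultimately show ?thesis by (metis card_atLeastAtMost card_image diff_Suc_1 Suc_eq_plus1)
qed

lemma K0_fin: "finite K0" using finV by (simp add: K0_def)

lemma Bk_early: "u \<in> V \<Longrightarrow> phi u \<le> k + 1 \<Longrightarrow> Bk u = {z \<in> V. phi z < phi u}"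
proof -
  assume u: "u \<in> V" "phi u \<le> k + 1"
  have sub: "Bk u \<subseteq> {z \<in> V. phi z < phi u}" by (auto simp: Bk_mem)
  have "card (Bk u) = card {z \<in> V. phi z < phi u}"
    using Bk_card[OF u(1)] card_before[OF u(1)] u(2) by simp
  moreover have "finite {z \<in> V. phi z < phi u}" using finV by simp
  ultimately show ?thesis using sub by (simp add: card_subset_eq)
qed

lemma K0_clique: "a \<in> K0 \<Longrightarrow> b \<in> K0 \<Longrightarrow> a \<noteq> b \<Longrightarrow> E a b"
proof -
  assume a: "a \<in> K0" and b: "b \<in> K0" and ne: "a \<noteq> b"
  have "phi a \<noteq> phi b" using a b ne phi_eq by (auto simp: K0_def)
  then consider "phi a < phi b" | "phi b < phi a" by linarith
  then show ?thesis
  proof cases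
    case 1
    then have "a \<in> Bk b" using Bk_early[of b] a b by (auto simp: K0_def)
    then show ?thesis using Bk_mem Esym by blast
  next
    case 2
    then have "b \<in> Bk a" using Bk_early[of a] a b by (auto simp: K0_def)
    then show ?thesis using Bk_mem by blast
  qed
qed

lemma deg_bound:
  assumes u: "u \<in> V" and n: "k + 1 \<le> card V"
  shows "k + card {c \<in> V. ch u c} \<le> degree V E u"
proof -
  have chsub: "{c \<in> V. ch u c} \<subseteq> neighbours V E u" by (auto simp: ch_def neighbours_def)
  obtain A where A: "A \<subseteq> neighbours V E u" "card A = k" "A \<inter> {c \<in> V. ch u c} = {}"
  proof (cases "k + 1 \<le> phi u")
    case True
    have "card (Bk u) = k" using Bk_card[OF u] True by simp
    moreover have "Bk u \<subseteq> neighbours V E u" by (auto simp: Bk_def)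
    moreover have "Bk u \<inter> {c \<in> V. ch u c} = {}" by (auto simp: Bk_mem ch_def)
    ultimately show ?thesis using that by blast
  next
    case False
    have "u \<in> K0" using False u by (simp add: K0_def)
    have "card (K0 - {u}) = k" using K0_card[OF n] \<open>u \<in> K0\<close> K0_fin by simp
    moreover have "K0 - {u} \<subseteq> neighbours V E u"
      using K0_clique \<open>u \<in> K0\<close> by (auto simp: neighbours_def K0_def)
    moreover have "(K0 - {u}) \<inter> {c \<in> V. ch u c} = {}" by (auto simp: K0_def ch_def)
    ultimately show ?thesis using that by blast
  qed
  have fn: "finite (neighbours V E u)" using finV by (simp add: neighbours_def)
  have "card (A \<union> {c \<in> V. ch u c}) = k + card {c \<in> V. ch u c}"
    using A fn chsub by (metis card_Un_disjoint finite_subset)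
  moreover have "card (A \<union> {c \<in> V. ch u c}) \<le> degree V E u"
    unfolding degree_def using A chsub fn by (intro card_mono) auto
  ultimately show ?thesis by simp
qed

lemma no_child: "u \<in> V \<Longrightarrow> k + 1 \<le> card V \<Longrightarrow> degree V E u \<le> k \<Longrightarrow> \<not> ch u c"
proof
  assume u: "u \<in> V" and n: "k + 1 \<le> card V" and d: "degree V E u \<le> k" and c: "ch u c"
  have "c \<in> V" using c by (simp add: ch_def)
  have "finite {c \<in> V. ch u c}" using finV by simp
  then have "card {c \<in> V. ch u c} \<ge> 1" using c \<open>c \<in> V\<close>
    by (metis (mono_tags, lifting) One_nat_def Suc_leI card_gt_0_iff empty_iff mem_Collect_eq)
  then show False using deg_bound[OF u n] d by simp
qed

lemma uniq_child: "u \<in> V \<Longrightarrow> k + 1 \<le> card V \<Longrightarrow> degree V E u \<le> k + 1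
   \<Longrightarrow> ch u c1 \<Longrightarrow> ch u c2 \<Longrightarrow> c1 = c2"
proof (rule ccontr)
  assume u: "u \<in> V" and n: "k + 1 \<le> card V" and d: "degree V E u \<le> k + 1"
    and c: "ch u c1" "ch u c2" "c1 \<noteq> c2"
  have "{c1, c2} \<subseteq> {c \<in> V. ch u c}" using c by (auto simp: ch_def)
  moreover have "finite {c \<in> V. ch u c}" using finV by simp
  ultimately have "card {c \<in> V. ch u c} \<ge> 2" using c(3)
    by (metis card_2_iff card_mono)
  then show False using deg_bound[OF u n] d by simp
qed

lemma core:
  assumes S: "S \<subseteq> V" "K0 \<subseteq> S" "card S < card V"
    and Bl: "\<And>b c. b \<in> Bl \<Longrightarrow> ch b c \<Longrightarrow> c \<in> S"
  shows "k \<le> card (S - Bl)"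
proof -
  have ne: "V - S \<noteq> {}" using S finV by (metis Diff_eq_empty_iff less_irrefl subset_antisym)
  have fin: "finite (phi ` (V - S))" using finV by simp
  define m where "m = Min (phi ` (V - S))"
  have "m \<in> phi ` (V - S)" using fin ne by (simp add: m_def)
  then obtain r where r: "r \<in> V - S" "phi r = m" by auto
  have rmin: "\<And>z. z \<in> V - S \<Longrightarrow> phi r \<le> phi z" using fin r by (simp add: m_def)
  have pr: "k + 2 \<le> phi r" using r S(2) by (force simp: K0_def)
  have "Bk r \<subseteq> S - Bl"
  proof
    fix z assume z: "z \<in> Bk r"
    then have zV: "z \<in> V" "E r z" "phi z < phi r" by (auto simp: Bk_mem)
    then have "z \<in> S" using rmin by force
    moreover have "z \<notin> Bl"
    proof
      assume "z \<in> Bl"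
      moreover have "ch z r" using zV r pr Esym by (auto simp: ch_def)
      ultimately show False using Bl r by blast
    qed
    ultimately show "z \<in> S - Bl" by simp
  qed
  moreover have "card (Bk r) = k" using Bk_card[of r] r pr by simp
  moreover have "finite (S - Bl)" using S finV finite_subset by blast
  ultimately show ?thesis by (metis card_mono)
qed

lemma K0_mem: "u \<in> K0 \<longleftrightarrow> u \<in> V \<and> phi u \<le> k + 1" by (simp add: K0_def)

lemma main_ord:
  assumes n: "k + 4 \<le> card V"
    and V: "v \<in> V" "w \<in> V" "x \<in> V" "y \<in> V"
    and e: "E v w" "E v x" "E w y"
    and d: "degree V E v = k + 1" "degree V E w = k + 1" "degree V E x \<le> k" "degree V E y \<le> k"
    and o: "phi v < phi w"
  shows False
proof -
  have n1: "k + 1 \<le> card V" using n by simp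
  have nx: "\<And>c. \<not> ch x c" using no_child[OF V(3) n1 d(3)] .
  have ny: "\<And>c. \<not> ch y c" using no_child[OF V(4) n1 d(4)] .
  have uv: "\<And>c1 c2. ch v c1 \<Longrightarrow> ch v c2 \<Longrightarrow> c1 = c2" using uniq_child[OF V(1) n1] d(1) by simp
  have uw: "\<And>c1 c2. ch w c1 \<Longrightarrow> ch w c2 \<Longrightarrow> c1 = c2" using uniq_child[OF V(2) n1] d(2) by simp
  have xw: "x \<noteq> w" using d by auto
  have yv: "y \<noteq> v" using d by auto
  have xv: "x \<noteq> v" using e Eirr by auto
  have yw: "y \<noteq> w" using e Eirr by auto
  have vw: "v \<noteq> w" using e Eirr by auto
  have K0c: "card K0 = k + 1" using K0_card[OF n1] .
  have finS: "\<And>S. S \<subseteq> V \<Longrightarrow> finite S" using finV finite_subset by blast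
  show False
  proof (cases "k + 2 \<le> phi w")
    case True
    have chvw: "ch v w" using True V e o by (simp add: ch_def)
    have pxv: "phi x \<noteq> phi v" using xv phi_eq V by blast
    have vK: "v \<in> K0" and xK: "x \<in> K0"
    proof -
      have "v \<in> K0 \<and> x \<in> K0"
      proof (cases "phi v < phi x")
        case True
        have "\<not> k + 2 \<le> phi x"
        proof
          assume "k + 2 \<le> phi x"
          then have "ch v x" using True V e by (simp add: ch_def)
          then show False using uv chvw xw by blast
        qed
        then show ?thesis using True V by (simp add: K0_mem)
      next
        case False
        then have lt: "phi x < phi v" using pxv by simp
        have "\<not> k + 2 \<le> phi v"
        proof
          assume "k + 2 \<le> phi v"
          then have "ch x v" using lt V e Esym by (simp add: ch_def)
          then show False using nx by blast
        qed
        then show ?thesis using lt V by (simp add: K0_mem)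
      qed
      then show "v \<in> K0" "x \<in> K0" by auto
    qed
    have pyw: "phi y \<noteq> phi w" using yw phi_eq V by blast
    have chwy: "ch w y"
    proof (cases "phi y < phi w")
      case True
      then have "ch y w" using \<open>k + 2 \<le> phi w\<close> V e Esym by (simp add: ch_def)
      then show ?thesis using ny by blast
    next
      case False
      then show ?thesis using pyw \<open>k + 2 \<le> phi w\<close> V e by (simp add: ch_def)
    qed
    define S where "S = K0 \<union> {w, y}"
    define Bl where "Bl = {v, w, x, y}"
    have "S - Bl \<subseteq> K0 - {v, x}" by (auto simp: S_def Bl_def)
    then have c1: "card (S - Bl) \<le> card (K0 - {v, x})" using K0_fin by (intro card_mono) auto
    have c2: "card (K0 - {v, x}) = k - 1" using K0c vK xK xv K0_fin by (simp add: card_Diff_subset)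
    have kpos: "1 \<le> k"
    proof -
      have "{v, x} \<subseteq> K0" using vK xK by auto
      then have "card {v, x} \<le> card K0" using K0_fin card_mono by blast
      then show ?thesis using K0c xv by simp
    qed
    have cS: "card S \<le> k + 3"
    proof -
      have "card S \<le> card K0 + card {w, y}" unfolding S_def by (rule card_Un_le)
      also have "card {w, y} \<le> 2" by (simp add: card_insert_le_m1)
      finally show ?thesis using K0c by simp
    qed
    have "k \<le> card (S - Bl)"
    proof (rule core)
      show "S \<subseteq> V" using V by (auto simp: S_def K0_def)
      show "K0 \<subseteq> S" by (auto simp: S_def)
      show "card S < card V" using cS n by simp
      fix b c assume "b \<in> Bl" "ch b c"
      then show "c \<in> S" using nx ny uv[OF chvw] uw[OF chwy] by (auto simp: Bl_def S_def)
    qed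
    then show False using c1 c2 kpos by simp
  next
    case False
    have vK: "v \<in> K0" and wK: "w \<in> K0" using False o V by (auto simp: K0_mem)
    have kpos: "1 \<le> k"
    proof -
      have "{v, w} \<subseteq> K0" using vK wK by auto
      then have "card {v, w} \<le> card K0" using K0_fin card_mono by blast
      then show ?thesis using K0c vw by simp
    qed
    have xc: "x \<notin> K0 \<Longrightarrow> ch v x" using vK V e by (auto simp: K0_mem ch_def)
    have yc: "y \<notin> K0 \<Longrightarrow> ch w y" using wK V e by (auto simp: K0_mem ch_def)
    obtain t where t: "t \<in> V" "phi t = k + 2" using phiex[of "k+2"] n by auto
    have BtK: "Bk t \<subseteq> K0" using t by (auto simp: Bk_mem K0_mem)
    have Btc: "card (Bk t) = k" using Bk_card[OF t(1)] t by simp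
    have cht: "\<And>a. a \<in> Bk t \<Longrightarrow> ch a t" using t Esym by (auto simp: Bk_mem ch_def)
    have xB: "x \<notin> Bk t" using cht nx by blast
    have yB: "y \<notin> Bk t" using cht ny by blast
    have small: "\<And>a b. a \<in> K0 \<Longrightarrow> b \<in> K0 \<Longrightarrow> a \<noteq> b \<Longrightarrow> a \<notin> Bk t \<Longrightarrow> b \<notin> Bk t \<Longrightarrow> False"
    proof -
      fix a b assume ab: "a \<in> K0" "b \<in> K0" "a \<noteq> b" "a \<notin> Bk t" "b \<notin> Bk t"
      then have "Bk t \<subseteq> K0 - {a, b}" using BtK by auto
      then have "card (Bk t) \<le> card (K0 - {a, b})" using K0_fin by (intro card_mono) auto
      also have "\<dots> = k - 1" using K0c ab K0_fin by (simp add: card_Diff_subset)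
      finally show False using Btc kpos by simp
    qed
    define S where "S = K0 \<union> {t, x, y}"
    define Bl where "Bl = {v, w, x, y}"
    have chv: "\<And>c. ch v c \<Longrightarrow> c \<in> S"
    proof -
      fix c assume c: "ch v c"
      show "c \<in> S"
      proof (cases "x \<in> K0")
        case True
        then have "v \<in> Bk t" using small[OF True vK xv] xB by blast
        then show ?thesis using cht uv c by (auto simp: S_def)
      next
        case False
        then show ?thesis using xc uv c by (auto simp: S_def)
      qed
    qed
    have chw: "\<And>c. ch w c \<Longrightarrow> c \<in> S"
    proof -
      fix c assume c: "ch w c"
      show "c \<in> S"
      proof (cases "y \<in> K0")
        case True
        then have "w \<in> Bk t" using small[OF True wK yw] yB by blast
        then show ?thesis using cht uw c by (auto simp: S_def)
      next
        case False
        then show ?thesis using yc uw c by (auto simp: S_def)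
      qed
    qed
    have cSB: "card (S - Bl) < k"
    proof -
      have ckvw: "card (K0 - {v, w}) = k - 1" using K0c vK wK vw K0_fin by (simp add: card_Diff_subset)
      consider (a) "x \<in> K0" | (b) "y \<in> K0" | (c) "x \<notin> K0" "y \<notin> K0" by blast
      then show ?thesis
      proof cases
        case a
        have "S - Bl \<subseteq> (K0 - {v, w, x}) \<union> {t}" by (auto simp: S_def Bl_def)
        then have "card (S - Bl) \<le> card ((K0 - {v, w, x}) \<union> {t})" using K0_fin by (intro card_mono) auto
        also have "\<dots> \<le> card (K0 - {v, w, x}) + 1" using card_Un_le[of "K0 - {v, w, x}" "{t}"] by simp
        also have "card (K0 - {v, w, x}) = k - 2" using K0c vK wK a vw xv xw K0_fin by (simp add: card_Diff_subset)
        finally have "card (S - Bl) \<le> k - 2 + 1" .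
        moreover have "card {v, w, x} \<le> card K0" using vK wK a K0_fin card_mono by (metis empty_subsetI insert_subset)
        ultimately show ?thesis using K0c vw vw xv xw by (simp split: if_splits)
      next
        case b
        have "S - Bl \<subseteq> (K0 - {v, w, y}) \<union> {t}" by (auto simp: S_def Bl_def)
        then have "card (S - Bl) \<le> card ((K0 - {v, w, y}) \<union> {t})" using K0_fin by (intro card_mono) auto
        also have "\<dots> \<le> card (K0 - {v, w, y}) + 1" using card_Un_le[of "K0 - {v, w, y}" "{t}"] by simp
        also have "card (K0 - {v, w, y}) = k - 2" using K0c vK wK b vw yv yw K0_fin by (simp add: card_Diff_subset)
        finally have "card (S - Bl) \<le> k - 2 + 1" .
        moreover have "card {v, w, y} \<le> card K0" using vK wK b K0_fin card_mono by (metis empty_subsetI insert_subset)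
        ultimately show ?thesis using K0c vw vw yv yw by (simp split: if_splits)
      next
        case c
        have "v \<in> Bk t \<or> w \<in> Bk t" using small[OF vK wK vw] by blast
        then have "t = x \<or> t = y" using cht uv uw xc yc c by blast
        then have "S - Bl \<subseteq> K0 - {v, w}" by (auto simp: S_def Bl_def)
        then have "card (S - Bl) \<le> card (K0 - {v, w})" using K0_fin by (intro card_mono) auto
        then show ?thesis using ckvw kpos by simp
      qed
    qed
    have cS: "card S < card V"
    proof -
      have "S \<subseteq> (S - Bl) \<union> Bl" by auto
      then have "card S \<le> card ((S - Bl) \<union> Bl)" using K0_fin by (intro card_mono) (auto simp: S_def Bl_def)
      also have "\<dots> \<le> card (S - Bl) + card Bl" by (rule card_Un_le)
      also have "card Bl \<le> 4" unfolding Bl_def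
        using card_length[of "[v, w, x, y]"] by simp
      finally show ?thesis using cSB n by simp
    qed
    have "k \<le> card (S - Bl)"
    proof (rule core)
      show "S \<subseteq> V" using V t by (auto simp: S_def K0_def)
      show "K0 \<subseteq> S" by (auto simp: S_def)
      show "card S < card V" using cS .
      fix b c assume "b \<in> Bl" "ch b c"
      then show "c \<in> S" using nx ny chv chw by (auto simp: Bl_def)
    qed
    then show False using cSB by simp
  qed
qed

end

theorem mainTheorem13:
  fixes k :: nat and V :: "'a set" and E :: "'a \<Rightarrow> 'a \<Rightarrow> bool"
  assumes "k_tree k V E"
    and "card V \<ge> k + 4"
  shows "\<not> (\<exists>v\<in>V. \<exists>w\<in>V. E v w \<and> degree V E v = k + 1 \<and> degree V E w = k + 1
              \<and> (\<exists>x\<in>V. E v x \<and> degree V E x \<le> k)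
              \<and> (\<exists>y\<in>V. E w y \<and> degree V E y \<le> k))"
proof
  assume "\<exists>v\<in>V. \<exists>w\<in>V. E v w \<and> degree V E v = k + 1 \<and> degree V E w = k + 1
              \<and> (\<exists>x\<in>V. E v x \<and> degree V E x \<le> k)
              \<and> (\<exists>y\<in>V. E w y \<and> degree V E y \<le> k)"
  then obtain v w x y where V: "v \<in> V" "w \<in> V" "x \<in> V" "y \<in> V"
    and e: "E v w" "E v x" "E w y"
    and d: "degree V E v = k + 1" "degree V E w = k + 1" "degree V E x \<le> k" "degree V E y \<le> k"
    by blast
  obtain phi where sg: "simple_graph V E" and b: "bij_betw phi V {1..card V}"
    and h: "\<forall>v\<in>V. is_clique E {u \<in> neighbours V E v. phi u < phi v}
                 \<and> card {u \<in> neighbours V E v. phi u < phi v} = min k (phi v - 1)"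
    using assms(1) unfolding k_tree_def Let_def by blast
  interpret kt k V E phi using sg b h by unfold_locales
  have "v \<noteq> w" using e Eirr by auto
  then have "phi v \<noteq> phi w" using phi_eq V by blast
  then consider "phi v < phi w" | "phi w < phi v" by linarith
  then show False
  proof cases
    case 1
    show False by (rule main_ord[OF assms(2) V e d 1])
  next
    case 2
    show False by (rule main_ord[OF assms(2) V(2,1,4,3) Esym[OF e(1)] e(3,2) d(2,1,4,3) 2])
  qed
qed

end
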